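(* Let $(a,b,c)$ be a standard Pythagorean triple. Then there exist polynomials $\mathcal{A}(q),\mathcal{B}(q),\mathcal{C}(q)\in\mathbb{Z}[q]$ such that: (0) they satisfy the $q$-deformed Pythagoras equation $$\mathcal{A}(q)^2+q\,\mathcal{B}(q)^2=\mathcal{C}(q)\,\mathcal{C}^*(q),\qquad\text{where } \mathcal{C}^*(q):=q^{\deg(\mathcal{C})}\,\mathcal{C}(q^{-1});$$ (1) $\mathcal{A},\mathcal{B},\mathcal{C}$ have positive integer coefficients; (2) $\mathcal{A}$ and $\mathcal{B}$ are self-reciprocal (palindromic), i.e. $q^{\deg P}P(q^{-1})=P(q)$ for $P\in\{\mathcal{A},\mathcal{B}\}$; (3) $\mathcal{A},\mathcal{B},\mathcal{C}$ and $\mathcal{C}^*$ are monic, i.e. their leading coefficient and their lowest-degree coefficient are both equal to $1$; and moreover $(\mathcal{A}(1),\mathcal{B}(1),\mathcal{C}(1))=(a,b,c)$.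
   Context: A Pythagorean triple is a triple $(a,b,c)$ of positive integers with $a^2+b^2=c^2$. It is called standard if either $\gcd(a,b,c)=1$ and $a$ is even, or $\gcd(a,b,c)=2$ and $a/2$ is odd. (The order matters: $a$ and $b$ are not interchangeable.) *)

theory Defs
  imports "HOL-Computational_Algebra.Polynomial"
begin

definition standard_pyth_triple :: "nat \<Rightarrow> nat \<Rightarrow> nat \<Rightarrow> bool" where
  "standard_pyth_triple a b c \<longleftrightarrow>
     a > 0 \<and> b > 0 \<and> c > 0 \<and> a^2 + b^2 = c^2 \<and>
     ((gcd a (gcd b c) = 1 \<and> even a) \<or> (gcd a (gcd b c) = 2 \<and> odd (a div 2)))"

text \<open>C*(q) = q^deg C * C(1/q): this is exactly reflect_poly (reversed coefficient list).\<close>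
abbreviation qstar :: "int poly \<Rightarrow> int poly" where
  "qstar p \<equiv> reflect_poly p"

definition low_coeff :: "int poly \<Rightarrow> int" where
  "low_coeff p = coeff p (LEAST i. coeff p i \<noteq> 0)"

definition monic2 :: "int poly \<Rightarrow> bool" where
  "monic2 p \<longleftrightarrow> lead_coeff p = 1 \<and> low_coeff p = 1"

definition self_reciprocal :: "int poly \<Rightarrow> bool" where
  "self_reciprocal p \<longleftrightarrow> reflect_poly p = p"

definition nonneg_coeffs :: "int poly \<Rightarrow> bool" where
  "nonneg_coeffs p \<longleftrightarrow> (\<forall>i. coeff p i \<ge> 0)"

end

theory Submission
  imports Defs "HOL-Computational_Algebra.Nth_Powers"
begin


lemma param:
  assumes "standard_pyth_triple a b c"
  shows "\<exists>m n. n > 0 \<and> m > n \<and> a = 2*m*n \<and> b + n^2 = m^2 \<and> c = m^2 + n^2"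
proof -
  have pos: "a > 0" "b > 0" "c > 0" and eq: "a^2 + b^2 = c^2"
    and cs: "(gcd a (gcd b c) = 1 \<and> even a) \<or> (gcd a (gcd b c) = 2 \<and> odd (a div 2))"
    using assms unfolding standard_pyth_triple_def by auto
  have ea: "even a" using cs by (metis dvd_gcdD1 dvd_refl)
  have ebc: "even (b + c)"
  proof (cases "gcd a (gcd b c) = 2")
    case True
    then have "2 dvd b" "2 dvd c" by (metis dvd_gcdD1 dvd_gcdD2 dvd_refl)+
    then show ?thesis by simp
  next
    case False
    have "even (a^2)" using ea by simp
    then have "even b = even c" using eq
      by (metis even_add even_power zero_less_numeral)
    then show ?thesis by simp
  qed
  have bc: "b < c"
  proof -
    have "b^2 < c^2" using eq pos by (metis add_gr_0 less_add_same_cancel2 zero_less_power)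
    then show ?thesis by (simp add: power_less_imp_less_base)
  qed
  obtain h where h: "a = 2*h" using ea by blast
  define x where "x = (c + b) div 2"
  define y where "y = (c - b) div 2"
  have xy1: "x + y = c" "x = y + b" using ebc bc unfolding x_def y_def by presburger+
  have "4*(x*y) = a^2"
  proof -
    have c2: "c = b + 2*y" using xy1 by simp
    have "a^2 + b^2 = b^2 + 4*(x*y)" using eq unfolding c2 xy1(2) by (simp add: power2_eq_square algebra_simps)
    then show ?thesis by simp
  qed
  then have xyh: "x*y = h^2" using h by (simp add: power2_eq_square)
  have hpos: "h > 0" using h pos by simp
  have xpos: "x > 0" "y > 0" using xyh hpos by (metis mult_is_0 neq0_conv zero_less_power)+
  have cop: "coprime x y"
  proof -
    define d where "d = gcd x y"
    have "d dvd c" "d dvd b" using xy1 unfolding d_def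
      by (metis dvd_add gcd_dvd1 gcd_dvd2, metis dvd_add_right_iff gcd_dvd1 gcd_dvd2)
    have "d*d dvd x*y" unfolding d_def by (simp add: mult_dvd_mono)
    then have "d^2 dvd h^2" using xyh by (simp add: power2_eq_square)
    then have dh: "d dvd h" using pow_divides_pow_iff[of 2] by simp
    then have "d dvd a" using h by simp
    then have dg: "d dvd gcd a (gcd b c)" using \<open>d dvd c\<close> \<open>d dvd b\<close> by simp
    have "d = 1"
    proof (cases "gcd a (gcd b c) = 1")
      case True then show ?thesis using dg by simp
    next
      case False
      then have "gcd a (gcd b c) = 2" "odd h" using cs h by auto
      then have "d dvd 2" "odd d" using dg dh by (auto dest: dvd_trans)
      then have "d \<le> 2" "odd d" using dvd_imp_le[of d 2] by auto
      then show ?thesis by (auto simp: le_Suc_eq numeral_2_eq_2)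
    qed
    then show ?thesis unfolding d_def by (simp add: coprime_iff_gcd_eq_1)
  qed
  have "is_nth_power 2 (x*y)" using xyh by (auto simp: is_nth_power_def)
  then have "is_nth_power 2 x" "is_nth_power 2 y"
    using is_nth_power_mult_coprime_natD[OF cop _ xpos] by auto
  then obtain m n where mn: "x = m^2" "y = n^2" by (auto simp: is_nth_power_def)
  have "(m*n)^2 = h^2" using xyh mn by (simp add: power_mult_distrib)
  then have "m*n = h" by (simp add: power2_eq_iff)
  moreover have "n > 0" using mn xpos by simp
  moreover have "m > n"
  proof -
    have "n^2 < m^2" using mn xy1 pos by simp
    then show ?thesis using power_less_imp_less_base by blast
  qed
  ultimately show ?thesis using mn xy1 h by (intro exI[of _ m] exI[of _ n]) auto
qed



definition qn :: "nat \<Rightarrow> int poly" where "qn j = Poly (replicate j 1)"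

lemma qn_0[simp]: "qn 0 = 0" by (simp add: qn_def)
lemma qn_Suc: "qn (Suc j) = pCons 1 (qn j)" by (simp add: qn_def)

lemma coeff_qn: "coeff (qn j) i = (if i < j then 1 else 0)"
  by (simp add: qn_def coeff_Poly_eq nth_default_def)

lemma degree_qn: "j > 0 \<Longrightarrow> degree (qn j) = j - 1"
  by (rule antisym) (auto intro!: degree_le le_degree simp: coeff_qn)

lemma qn_nz: "j > 0 \<Longrightarrow> qn j \<noteq> 0"
  by (metis coeff_0 coeff_qn zero_neq_one)

lemma lead_qn: "j > 0 \<Longrightarrow> lead_coeff (qn j) = 1"
  by (simp add: degree_qn coeff_qn)

lemma coeff0_qn: "j > 0 \<Longrightarrow> coeff (qn j) 0 = 1"
  by (simp add: coeff_qn)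

lemma nt_rep: "no_trailing ((=) 0) (replicate j (1::int))"
  by (induction j) auto

lemma nl_rep: "no_leading ((=) 0) (replicate j (1::int))"
  by (cases j) auto

lemma reflect_qn: "reflect_poly (qn j) = qn j"
  unfolding qn_def by (subst reflect_poly_Poly_nz) (simp_all add: nt_rep nl_rep)

lemma poly_qn: "poly (qn j) 1 = int j"
  by (induction j) (auto simp: qn_Suc)

lemma Xmonom: "[:0,1:] ^ j = (monom 1 j :: int poly)"
  by (simp add: monom_altdef)

lemma one_minus_qn: "(1 - monom 1 1) * qn j = 1 - monom 1 j"
proof (induction j)
  case 0 then show ?case by simp
next
  case (Suc j)
  have "qn (Suc j) = 1 + monom 1 1 * qn j"
    by (simp add: qn_Suc monom_altdef) (metis add_pCons pCons_0_0 add.right_neutral mult.left_neutral one_pCons add_0 mult_pCons_left smult_0_left mult_zero_left)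
  then have "(1 - monom 1 1) * qn (Suc j) = (1 - monom 1 1) + monom 1 1 * ((1 - monom 1 1) * qn j)"
    by (simp add: algebra_simps)
  also have "\<dots> = 1 - monom 1 1 * monom 1 j" unfolding Suc.IH by (simp add: algebra_simps)
  also have "\<dots> = 1 - monom 1 (Suc j)" by (simp add: mult_monom)
  finally show ?case .
qed

lemma reflect_eqI:
  assumes "degree p = d" "\<And>i. i \<le> d \<Longrightarrow> coeff r i = coeff p (d - i)" "\<And>i. i > d \<Longrightarrow> coeff r i = 0"
  shows "reflect_poly p = r"
  by (rule poly_eqI) (use assms in \<open>auto simp: coeff_reflect_poly\<close>)

lemma pal_coeff: "reflect_poly p = p \<Longrightarrow> i \<le> degree p \<Longrightarrow> coeff p (degree p - i) = coeff p i"
  by (metis coeff_reflect_poly not_less)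

lemma nn_mult: "nonneg_coeffs p \<Longrightarrow> nonneg_coeffs q \<Longrightarrow> nonneg_coeffs (p*q)"
  unfolding nonneg_coeffs_def coeff_mult by (auto intro!: sum_nonneg)

lemma nn_add: "nonneg_coeffs p \<Longrightarrow> nonneg_coeffs q \<Longrightarrow> nonneg_coeffs (p+q)"
  unfolding nonneg_coeffs_def by (auto intro!: add_nonneg_nonneg)

lemma nn_power: "nonneg_coeffs p \<Longrightarrow> nonneg_coeffs (p^j)"
proof (induction j)
  case 0 then show ?case by (simp add: nonneg_coeffs_def coeff_1)
next
  case (Suc j) then show ?case by (simp add: nn_mult)
qed

lemma nn_qn: "nonneg_coeffs (qn j)"
  by (simp add: nonneg_coeffs_def coeff_qn)

lemma nn_monom: "nonneg_coeffs (monom 1 j)"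
  by (simp add: nonneg_coeffs_def coeff_monom)

lemma nn_one: "nonneg_coeffs 1"
  by (simp add: nonneg_coeffs_def coeff_1)

lemma low1: "coeff p 0 = 1 \<Longrightarrow> low_coeff p = 1"
  unfolding low_coeff_def by (subst Least_eq_0) auto



lemma construct:
  fixes m n :: nat
  assumes n0: "n > 0" and mn: "m > n"
  shows "\<exists>A B C :: int poly.
     A^2 + [:0, 1:] * B^2 = C * qstar C \<and>
     nonneg_coeffs A \<and> nonneg_coeffs B \<and> nonneg_coeffs C \<and>
     self_reciprocal A \<and> self_reciprocal B \<and>
     monic2 A \<and> monic2 B \<and> monic2 C \<and> monic2 (qstar C) \<and>
     poly A 1 = 2 * int m * int n \<and> poly B 1 = int m ^ 2 - int n ^ 2 \<and> poly C 1 = int m ^ 2 + int n ^ 2"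
proof -
  define k where "k = m - n"
  have mk: "m = n + k" "k > 0" using mn unfolding k_def by auto
  define P where "P = qn m"
  define Q where "Q = qn n"
  define P2 where "P2 = P^2"
  define Q2 where "Q2 = Q^2"
  define T :: "int poly" where "T = 1 + monom 1 (k+1)"
  define A where "A = T * (P * Q)"
  define B where "B = qn k * qn (m+n)"
  define C where "C = P2 + monom 1 (2*k+1) * Q2"
  define D where "D = monom 1 1 * P2 + Q2"
  have Pnz: "P \<noteq> 0" "Q \<noteq> 0" using n0 mn qn_nz unfolding P_def Q_def by auto
  have dP2: "degree P2 = 2*m - 2" unfolding P2_def using Pnz
    using mn by (simp add: degree_power_eq P_def degree_qn)
  have dQ2: "degree Q2 = 2*n - 2" unfolding Q2_def using Pnz
    by (simp add: degree_power_eq Q_def degree_qn mn n0)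
  have rP2: "reflect_poly P2 = P2" "reflect_poly Q2 = Q2"
    unfolding P2_def Q2_def P_def Q_def by (simp_all add: reflect_poly_power reflect_qn)
  have Q2nz: "Q2 \<noteq> 0" using Pnz unfolding Q2_def by simp
  have lQ2: "lead_coeff Q2 = 1" "lead_coeff P2 = 1" unfolding Q2_def P2_def Q_def P_def
    using n0 mn by (simp_all add: lead_coeff_power lead_qn)
  have c0: "coeff Q2 0 = 1" "coeff P2 0 = 1" unfolding Q2_def P2_def Q_def P_def
    using n0 mn by (simp_all add: coeff_0_power coeff0_qn)
  have dM: "degree (monom 1 (2*k+1) * Q2) = 2*m - 1"
    using Q2nz n0 mk by (simp add: degree_mult_eq degree_monom_eq dQ2)
  have dC: "degree C = 2*m - 1" unfolding C_def
    by (subst degree_add_eq_right) (use dM dP2 n0 mn in auto)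
  have coeffC: "coeff C j = coeff P2 j + (if j < 2*k+1 then 0 else coeff Q2 (j - (2*k+1)))" for j
    unfolding C_def by (simp add: coeff_monom_mult)
  have coeffD: "coeff D j = (if j < 1 then 0 else coeff P2 (j - 1)) + coeff Q2 j" for j
    unfolding D_def by (simp add: coeff_monom_mult)
  have zP: "coeff P2 j = 0" if "j > 2*m-2" for j using that dP2 by (simp add: coeff_eq_0)
  have zQ: "coeff Q2 j = 0" if "j > 2*n-2" for j using that dQ2 by (simp add: coeff_eq_0)
  have palP: "coeff P2 (2*m-2-i) = coeff P2 i" if "i \<le> 2*m-2" for i
    using pal_coeff[OF rP2(1), of i] that dP2 by simp
  have palQ: "coeff Q2 (2*n-2-i) = coeff Q2 i" if "i \<le> 2*n-2" for i
    using pal_coeff[OF rP2(2), of i] that dQ2 by simp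
  have rC: "reflect_poly C = D"
  proof (rule reflect_eqI[OF dC])
    fix i assume i: "i \<le> 2*m-1"
    have e1: "(if i < 1 then 0 else coeff P2 (i - 1)) = coeff P2 (2*m-1-i)"
    proof (cases "i = 0")
      case True then show ?thesis using zP[of "2*m-1"] mn by simp
    next
      case False
      then have "2*m-1-i = 2*m-2-(i-1)" "i - 1 \<le> 2*m-2" using i by auto
      then show ?thesis using palP[of "i-1"] False by simp
    qed
    have e2: "coeff Q2 i = (if 2*m-1-i < 2*k+1 then 0 else coeff Q2 (2*m-1-i - (2*k+1)))"
    proof (cases "i \<le> 2*n-2")
      case True
      then have "\<not> 2*m-1-i < 2*k+1" "2*m-1-i - (2*k+1) = 2*n-2-i" using mk n0 by auto
      then show ?thesis using palQ[OF True] by simp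
    next
      case False
      then have "2*m-1-i < 2*k+1" using mk n0 by auto
      then show ?thesis using zQ False by simp
    qed
    show "coeff D i = coeff C (2*m-1-i)" unfolding coeffD coeffC e1 e2 by simp
  next
    fix i assume i: "i > 2*m-1"
    show "coeff D i = 0" unfolding coeffD using i zP[of "i-1"] zQ[of i] mk by auto
  qed
  have leadC: "lead_coeff C = 1" unfolding dC coeffC
    using zP[of "2*m-1"] mk n0 lQ2(1) dQ2 by simp
  have c0C: "coeff C 0 = 1" unfolding coeffC using c0 by simp
  have dT: "degree T = k+1" unfolding T_def
    by (subst degree_add_eq_right) (simp_all add: degree_monom_eq)
  have coeffT: "coeff T i = (if i = 0 then 1 else 0) + (if i = k+1 then 1 else 0)" for i
    unfolding T_def by (simp add: coeff_monom coeff_1)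
  have rT: "reflect_poly T = T"
    by (rule reflect_eqI[OF dT]) (auto simp: coeffT)
  have lT: "lead_coeff T = 1" "coeff T 0 = 1" unfolding dT coeffT by simp_all
  have XB: "B = P2 - monom 1 k * Q2"
  proof -
    let ?x = "monom 1 1 :: int poly"
    let ?y = "monom 1 k :: int poly"
    let ?z = "monom 1 n :: int poly"
    have nz: "(1 - ?x)^2 \<noteq> 0"
    proof
      assume "(1 - ?x)^2 = 0"
      then have "1 - ?x = 0" by simp
      then have "coeff (1 - ?x) 0 = 0" by simp
      then show False by (simp add: coeff_1)
    qed
    have mz: "monom 1 m = ?y * ?z" "monom 1 (m+n) = ?y * ?z * ?z"
      using mk by (simp_all add: mult_monom add_ac)
    have "(1 - ?x)^2 * (P2 - ?y * Q2) = ((1 - ?x) * P)^2 - ?y * ((1 - ?x) * Q)^2"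
      unfolding P2_def Q2_def by (simp add: algebra_simps power2_eq_square)
    also have "\<dots> = (1 - ?y*?z)^2 - ?y * (1 - ?z)^2"
      unfolding P_def Q_def one_minus_qn mz ..
    also have "\<dots> = (1 - ?y) * (1 - ?y * ?z * ?z)"
      by (simp add: algebra_simps power2_eq_square)
    also have "\<dots> = ((1 - ?x) * qn k) * ((1 - ?x) * qn (m+n))"
      unfolding one_minus_qn mz(2) ..
    also have "\<dots> = (1 - ?x)^2 * B"
      unfolding B_def by (simp add: algebra_simps power2_eq_square)
    finally show ?thesis using nz by simp
  qed
  have ident: "A^2 + [:0, 1:] * B^2 = C * qstar C"
  proof -
    let ?x = "monom 1 1 :: int poly"
    let ?y = "monom 1 k :: int poly"
    have X1: "[:0, 1:] = ?x" using Xmonom[of 1] by simp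
    have m1: "monom 1 (k+1) = ?y * ?x" "monom 1 (2*k+1) = ?y * ?y * ?x"
      by (simp_all add: mult_monom mult_2)
    show ?thesis unfolding rC unfolding X1 XB A_def T_def C_def D_def m1 P2_def Q2_def
      by (simp add: algebra_simps power2_eq_square)
  qed
  have nnP: "nonneg_coeffs P2" "nonneg_coeffs Q2" "nonneg_coeffs P" "nonneg_coeffs Q"
    unfolding P2_def Q2_def P_def Q_def by (simp_all add: nn_power nn_qn)
  have nnT: "nonneg_coeffs T" unfolding T_def by (simp add: nn_add nn_one nn_monom)
  have "nonneg_coeffs A" unfolding A_def using nnT nnP by (simp add: nn_mult)
  moreover have "nonneg_coeffs B" unfolding B_def by (simp add: nn_mult nn_qn)
  moreover have "nonneg_coeffs C" unfolding C_def using nnP by (simp add: nn_mult nn_add nn_monom)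
  moreover have "self_reciprocal A" unfolding self_reciprocal_def A_def P_def Q_def
    by (simp add: reflect_poly_mult rT reflect_qn)
  moreover have "self_reciprocal B" unfolding self_reciprocal_def B_def
    by (simp add: reflect_poly_mult reflect_qn)
  moreover have "monic2 A" unfolding monic2_def A_def
    using lT n0 mn by (auto intro!: low1 simp: lead_coeff_mult coeff_mult_0 P_def Q_def lead_qn coeff0_qn)
  moreover have "monic2 B" unfolding monic2_def B_def
    using mk n0 mn by (auto intro!: low1 simp: lead_coeff_mult coeff_mult_0 lead_qn coeff0_qn)
  moreover have "monic2 C" unfolding monic2_def using leadC c0C by (simp add: low1)
  moreover have "monic2 (qstar C)" unfolding monic2_def
  proof
    show "lead_coeff (reflect_poly C) = 1"
      using c0C by (simp add: coeff_reflect_poly)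
    show "low_coeff (reflect_poly C) = 1" using leadC by (simp add: low1)
  qed
  moreover have "poly A 1 = 2 * int m * int n"
    unfolding A_def T_def P_def Q_def by (simp add: poly_qn poly_monom)
  moreover have "poly B 1 = int m ^ 2 - int n ^ 2"
    unfolding B_def using mk by (simp add: poly_qn power2_eq_square algebra_simps)
  moreover have "poly C 1 = int m ^ 2 + int n ^ 2"
    unfolding C_def P2_def Q2_def P_def Q_def by (simp add: poly_qn poly_monom)
  ultimately show ?thesis using ident by blast
qed


theorem theorem1:
  fixes a b c :: nat
  assumes "standard_pyth_triple a b c"
  shows "\<exists>A B C :: int poly.
     A^2 + [:0, 1:] * B^2 = C * qstar C \<and>
     nonneg_coeffs A \<and> nonneg_coeffs B \<and> nonneg_coeffs C \<and>
     self_reciprocal A \<and> self_reciprocal B \<and>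
     monic2 A \<and> monic2 B \<and> monic2 C \<and> monic2 (qstar C) \<and>
     poly A 1 = int a \<and> poly B 1 = int b \<and> poly C 1 = int c"
proof -
  obtain m n where mn: "n > 0" "m > n" "a = 2*m*n" "b + n^2 = m^2" "c = m^2 + n^2"
    using param[OF assms] by blast
  have ia: "int a = 2 * int m * int n" using mn by simp
  have ib: "int b = int m ^ 2 - int n ^ 2"
  proof -
    have "int b + int n ^ 2 = int m ^ 2" using mn(4) by (metis of_nat_add of_nat_power)
    then show ?thesis by simp
  qed
  have ic: "int c = int m ^ 2 + int n ^ 2" using mn by simp
  show ?thesis unfolding ia ib ic using construct[OF mn(1,2)] by blast
qed

end
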